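(* Let $T\ge 1$ and let $p$ be a $T$-period random joint choice rule on a finite set $X$. Then $p$ is consistent with consumption dependent random utility if and only if it satisfies marginality and complete monotonicity.
   Context: $\mathcal{X}$ is the set of nonempty subsets of $X$, $\mathcal{L}(X)$ the linear orders, $N(x,A)=\{\succ: x\succ y\ \forall y\in A\setminus\{x\}\}$. For vectors, $\mathbf{x}^\tau=(x_1,\dots,x_\tau)$, $\mathbf{A}^\tau=(A_1,\dots,A_\tau)\in\mathcal{X}^\tau$, $\succ^\tau=(\succ_1,\dots,\succ_\tau)$, and $\mathbf{x}^\tau\in\mathbf{A}^\tau$ means $x_i\in A_i$ for all $i$. A $T$-period random joint choice rule assigns to each $\mathbf{A}^T\in\mathcal{X}^T$ and $\mathbf{x}^T\in\mathbf{A}^T$ a number $p(\mathbf{x}^T,\mathbf{A}^T)\ge0$ with $\sum_{\mathbf{x}^T\in\mathbf{A}^T}p(\mathbf{x}^T,\mathbf{A}^T)=1$. For $\tau<T$ define recursively $p(\mathbf{x}^\tau,\mathbf{A}^\tau)=\sum_{y\in X}p(\mathbf{x}^\tau,y,\mathbf{A}^\tau,X)$. Marginality: for every $\tau\in\{1,\dots,T-1\}$, $\mathbf{A}^\tau\in\mathcal{X}^\tau$, $\mathbf{x}^\tau\in\mathbf{A}^\tau$ and $B,C\in\mathcal{X}$, $\sum_{y\in B}p(\mathbf{x}^\tau,y,\mathbf{A}^\tau,B)=\sum_{y\in C}p(\mathbf{x}^\tau,y,\mathbf{A}^\tau,C)$. The Möbius inverse $q$ is defined by $p(\mathbf{x}^T,\mathbf{A}^T)=\sum_{A_1\subseteq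 A_1'\subseteq X}\cdots\sum_{A_T\subseteq A_T'\subseteq X}q(\mathbf{x}^T,A_1',\dots,A_T')$; complete monotonicity means $q(\mathbf{x}^T,\mathbf{A}^T)\ge0$ for all $\mathbf{A}^T$, $\mathbf{x}^T\in\mathbf{A}^T$. A transition function of degree $n$ is a map $t^n:X^n\times\mathcal{L}(X)^n\to\Delta(\mathcal{L}(X))$, with $t^n_{\succ'}(\cdot)$ the probability of $\succ'$. $p$ is consistent with consumption dependent random utility if there exist $\nu\in\Delta(\mathcal{L}(X))$ and transition functions $t^1,\dots,t^{T-1}$ ($t^n$ of degree $n$) such that for all $\mathbf{A}^T$, $\mathbf{x}^T\in\mathbf{A}^T$: $p(\mathbf{x}^T,\mathbf{A}^T)=\sum_{\succ_1\in N(x_1,A_1)}\cdots\sum_{\succ_T\in N(x_T,A_T)}\nu(\succ_1)\prod_{\tau=2}^T t^{\tau-1}_{\succ_\tau}(\mathbf{x}^{\tau-1},\succ^{\tau-1})$. *)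

theory Defs
  imports "HOL-Probability.Probability"
begin

text \<open>The ground set X is the universe of a finite type 'a.  A linear order (strict preference) is a relation r with
  (x,y) in r meaning "x is preferred to y".\<close>

definition lorders :: "'a rel set" where
  "lorders = {r. strict_linear_order r}"

definition Nset :: "'a \<Rightarrow> 'a set \<Rightarrow> 'a rel set" where
  "Nset x A = {r \<in> lorders. \<forall>y \<in> A - {x}. (x, y) \<in> r}"

definition vec_in :: "'b list \<Rightarrow> 'b set list \<Rightarrow> bool" where
  "vec_in xs As \<longleftrightarrow> length xs = length As \<and> (\<forall>i < length As. xs ! i \<in> As ! i)"

definition menus :: "nat \<Rightarrow> 'a set list set" where
  "menus n = {As. length As = n \<and> (\<forall>A \<in> set As. A \<noteq> {})}"

definition is_rjcr :: "nat \<Rightarrow> ('a::finite list \<Rightarrow> 'a set list \<Rightarrow> real) \<Rightarrow> bool" where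
  "is_rjcr T p \<longleftrightarrow> (\<forall>As \<in> menus T.
      (\<forall>xs. vec_in xs As \<longrightarrow> p xs As \<ge> 0) \<and> (\<Sum>xs \<in> {xs. vec_in xs As}. p xs As) = 1)"

text \<open>Recursive extension to shorter vectors: marg p n xs As is p(x^tau, A^tau)
  with tau = T - n.\<close>
fun marg :: "('a::finite list \<Rightarrow> 'a set list \<Rightarrow> real) \<Rightarrow> nat \<Rightarrow> 'a list \<Rightarrow> 'a set list \<Rightarrow> real" where
  "marg p 0 xs As = p xs As"
| "marg p (Suc n) xs As = (\<Sum>y \<in> UNIV. marg p n (xs @ [y]) (As @ [UNIV]))"

definition marginality :: "nat \<Rightarrow> ('a::finite list \<Rightarrow> 'a set list \<Rightarrow> real) \<Rightarrow> bool" where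
  "marginality T p \<longleftrightarrow> (\<forall>\<tau> \<in> {1..T-1}. \<forall>As \<in> menus \<tau>. \<forall>xs. vec_in xs As \<longrightarrow>
      (\<forall>B C. B \<noteq> {} \<longrightarrow> C \<noteq> {} \<longrightarrow>
        (\<Sum>y \<in> B. marg p (T - (\<tau> + 1)) (xs @ [y]) (As @ [B])) =
        (\<Sum>y \<in> C. marg p (T - (\<tau> + 1)) (xs @ [y]) (As @ [C]))))"

definition supvecs :: "'a set list \<Rightarrow> 'a set list set" where
  "supvecs As = {Bs. length Bs = length As \<and> (\<forall>i < length As. As ! i \<subseteq> Bs ! i)}"

definition is_moebius_inverse ::
  "nat \<Rightarrow> ('a::finite list \<Rightarrow> 'a set list \<Rightarrow> real) \<Rightarrow> ('a list \<Rightarrow> 'a set list \<Rightarrow> real) \<Rightarrow> bool" where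
  "is_moebius_inverse T p q \<longleftrightarrow> (\<forall>As \<in> menus T. \<forall>xs. vec_in xs As \<longrightarrow>
      p xs As = (\<Sum>Bs \<in> supvecs As. q xs Bs))"

definition complete_monotone :: "nat \<Rightarrow> ('a::finite list \<Rightarrow> 'a set list \<Rightarrow> real) \<Rightarrow> bool" where
  "complete_monotone T p \<longleftrightarrow> (\<exists>q. is_moebius_inverse T p q \<and>
      (\<forall>As \<in> menus T. \<forall>xs. vec_in xs As \<longrightarrow> q xs As \<ge> 0))"

text \<open>Consumption dependent random utility. nu is a distribution on linear orders; t xs rs
  is the transition function of degree n = length xs = length rs.\<close>
definition cdru :: "nat \<Rightarrow> ('a::finite list \<Rightarrow> 'a set list \<Rightarrow> real) \<Rightarrow> bool" where
  "cdru T p \<longleftrightarrow> (\<exists>(nu :: 'a rel pmf) (t :: 'a list \<Rightarrow> 'a rel list \<Rightarrow> 'a rel pmf).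
      set_pmf nu \<subseteq> lorders \<and>
      (\<forall>n \<in> {1..T-1}. \<forall>xs rs. length xs = n \<longrightarrow> length rs = n \<longrightarrow> set rs \<subseteq> lorders \<longrightarrow>
          set_pmf (t xs rs) \<subseteq> lorders) \<and>
      (\<forall>As \<in> menus T. \<forall>xs. vec_in xs As \<longrightarrow>
          p xs As = (\<Sum>rs \<in> {rs. vec_in rs (map2 Nset xs As)}.
                       pmf nu (rs ! 0) *
                       (\<Prod>k \<in> {1..<T}. pmf (t (take k xs) (take k rs)) (rs ! k)))))"

end

theory Submission
  imports Defs
begin


definition low :: "'a \<Rightarrow> 'a rel \<Rightarrow> 'a set" where
  "low x r = insert x {y. (x,y) \<in> r}"

definition Rset :: "'a \<Rightarrow> 'a set \<Rightarrow> 'a rel set" where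
  "Rset x B = {r \<in> lorders. low x r = B}"

lemma Nset_low: "Nset x A = {r \<in> lorders. A \<subseteq> low x r}"
  unfolding Nset_def low_def by auto

lemma lordersD:
  assumes "r \<in> lorders"
  shows "trans r" "irrefl r" "\<And>x y. x \<noteq> y \<Longrightarrow> (x,y) \<in> r \<or> (y,x) \<in> r"
  using assms by (simp_all add: lorders_def strict_linear_order_on_def total_on_def)

lemma lorders_top_ex:
  assumes r: "r \<in> lorders" and fin: "finite A" and ne: "A \<noteq> {}"
  shows "\<exists>x\<in>A. A \<subseteq> low x r"
  using fin ne
proof (induction A rule: finite_ne_induct)
  case (singleton x) then show ?case by (simp add: low_def)
next
  case (insert a A)
  then obtain m where m: "m \<in> A" "A \<subseteq> low m r" by blast
  show ?case
  proof (cases "(a,m) \<in> r")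
    case True
    have "insert a A \<subseteq> low a r"
    proof
      fix z assume z: "z \<in> insert a A"
      show "z \<in> low a r"
      proof (cases "z = a")
        case False
        then have "z \<in> A" using z by simp
        then have "z = m \<or> (m,z) \<in> r" using m(2) by (auto simp: low_def)
        then have "(a,z) \<in> r" using True lordersD(1)[OF r] by (auto dest: transD)
        then show ?thesis by (simp add: low_def)
      qed (simp add: low_def)
    qed
    then show ?thesis by blast
  next
    case False
    have "a \<noteq> m" using m insert.hyps by blast
    then have "(m,a) \<in> r" using False lordersD(3)[OF r] by blast
    then have "insert a A \<subseteq> low m r" using m(2) by (simp add: low_def)
    then show ?thesis using m(1) by blast
  qed
qed

lemma lorders_top_unique:
  assumes r: "r \<in> lorders" and "x \<in> A" "y \<in> A" "A \<subseteq> low x r" "A \<subseteq> low y r"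
  shows "x = y"
proof (rule ccontr)
  assume "x \<noteq> y"
  then have "(x,y) \<in> r" "(y,x) \<in> r" using assms unfolding low_def by auto
  then have "(x,x) \<in> r" by (rule transD[OF lordersD(1)[OF r]])
  then show False using lordersD(2)[OF r] by (simp add: irrefl_def)
qed

lemma sum_Nset_partition:
  fixes B :: "'a::finite set" and h :: "'a rel \<Rightarrow> real"
  assumes "B \<noteq> {}"
  shows "(\<Sum>y\<in>B. \<Sum>r\<in>Nset y B. h r) = (\<Sum>r\<in>lorders. h r)"
proof -
  have "(\<Sum>y\<in>B. \<Sum>r\<in>Nset y B. h r) = (\<Sum>r\<in>(\<Union>y\<in>B. Nset y B). h r)"
  proof (rule sum.UNION_disjoint[symmetric])
    show "\<forall>i\<in>B. \<forall>j\<in>B. i \<noteq> j \<longrightarrow> Nset i B \<inter> Nset j B = {}"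
    proof (intro ballI impI)
      fix i j assume "i \<in> B" "j \<in> B" "i \<noteq> j"
      then show "Nset i B \<inter> Nset j B = {}"
        using lorders_top_unique[of _ i B j] unfolding Nset_low by blast
    qed
  qed auto
  also have "(\<Union>y\<in>B. Nset y B) = lorders"
    using lorders_top_ex[OF _ _ assms] unfolding Nset_low by auto
  finally show ?thesis .
qed

lemma sum_Nset_Rset:
  fixes x :: "'a::finite" and h :: "'a rel \<Rightarrow> real"
  shows "(\<Sum>r\<in>Nset x A. h r) = (\<Sum>C\<in>{C. A \<subseteq> C}. \<Sum>r\<in>Rset x C. h r)"
proof -
  have "(\<Sum>C\<in>{C. A \<subseteq> C}. \<Sum>r\<in>{r \<in> Nset x A. low x r = C}. h r) = (\<Sum>r\<in>Nset x A. h r)"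
    by (rule sum.group) (auto simp: Nset_low)
  moreover have "\<And>C. C \<in> {C. A \<subseteq> C} \<Longrightarrow> {r \<in> Nset x A. low x r = C} = Rset x C"
    by (auto simp: Nset_low Rset_def)
  ultimately show ?thesis by simp
qed

lemma vec_in_snoc: "vec_in (xs@[x]) (Ls@[L]) \<longleftrightarrow> vec_in xs Ls \<and> x \<in> L"
proof
  assume a: "vec_in (xs@[x]) (Ls@[L])"
  then have len: "length xs = length Ls" by (simp add: vec_in_def)
  have "\<forall>i < length Ls. xs ! i \<in> Ls ! i"
  proof (intro allI impI)
    fix i assume "i < length Ls"
    then have "(xs@[x])!i \<in> (Ls@[L])!i" using a by (simp add: vec_in_def)
    then show "xs ! i \<in> Ls ! i" using \<open>i < length Ls\<close> len by (simp add: nth_append)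
  qed
  moreover have all: "\<forall>i<length (Ls@[L]). (xs@[x])!i \<in> (Ls@[L])!i" using a unfolding vec_in_def by blast
  have "(xs@[x])!(length Ls) \<in> (Ls@[L])!(length Ls)" using all[rule_format, of "length Ls"] by simp
  then have "x \<in> L" using len by (simp add: nth_append)
  ultimately show "vec_in xs Ls \<and> x \<in> L" using len by (simp add: vec_in_def)
next
  assume "vec_in xs Ls \<and> x \<in> L"
  then show "vec_in (xs@[x]) (Ls@[L])"
    by (auto simp: vec_in_def nth_append less_Suc_eq)
qed

lemma vec_in_length: "vec_in xs Ls \<Longrightarrow> length xs = length Ls"
  by (simp add: vec_in_def)

lemma vec_set_snoc:
  "{rs. vec_in rs (Ls@[L])} = (\<lambda>(rs,r). rs@[r]) ` ({rs. vec_in rs Ls} \<times> L)"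
proof
  show "{rs. vec_in rs (Ls@[L])} \<subseteq> (\<lambda>(rs,r). rs@[r]) ` ({rs. vec_in rs Ls} \<times> L)"
  proof
    fix rs assume "rs \<in> {rs. vec_in rs (Ls@[L])}"
    then have v: "vec_in rs (Ls@[L])" by simp
    then have "rs \<noteq> []" by (auto simp: vec_in_def)
    then obtain ys y where rs: "rs = ys @ [y]" by (metis rev_exhaust)
    with v vec_in_snoc show "rs \<in> (\<lambda>(rs,r). rs@[r]) ` ({rs. vec_in rs Ls} \<times> L)" by fastforce
  qed
qed (auto simp: vec_in_snoc)

lemma inj_snoc: "inj_on (\<lambda>(rs,r). rs@[r]) A"
  by (auto simp: inj_on_def)

lemma finite_vec: "finite {rs :: ('b::finite) list. vec_in rs Ls}"
proof -
  have "{rs :: 'b list. vec_in rs Ls} \<subseteq> {xs. set xs \<subseteq> UNIV \<and> length xs = length Ls}"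
    by (auto simp: vec_in_def)
  moreover have "finite {xs :: 'b list. set xs \<subseteq> UNIV \<and> length xs = length Ls}"
    by (rule finite_lists_length_eq) simp
  ultimately show ?thesis by (rule finite_subset)
qed

lemma sum_vec_snoc:
  fixes h :: "('b::finite) list \<Rightarrow> real"
  shows "(\<Sum>rs\<in>{rs. vec_in rs (Ls@[L])}. h rs) = (\<Sum>rs\<in>{rs. vec_in rs Ls}. \<Sum>r\<in>L. h (rs@[r]))"
proof -
  have "(\<Sum>rs\<in>{rs. vec_in rs (Ls@[L])}. h rs) = (\<Sum>rs\<in>(\<lambda>(rs,r). rs@[r]) ` ({rs. vec_in rs Ls} \<times> L). h rs)"
    by (simp add: vec_set_snoc)
  also have "\<dots> = (\<Sum>(rs,r)\<in>{rs. vec_in rs Ls} \<times> L. h (rs@[r]))"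
    by (subst sum.reindex[OF inj_snoc]) (simp add: case_prod_unfold)
  also have "\<dots> = (\<Sum>rs\<in>{rs. vec_in rs Ls}. \<Sum>r\<in>L. h (rs@[r]))"
    by (rule sum.cartesian_product[symmetric])
  finally show ?thesis .
qed

lemma vec_Nil: "{rs. vec_in rs []} = {[]}"
  by (auto simp: vec_in_def)

lemma supvecs_vec: "supvecs As = {Bs. vec_in Bs (map (\<lambda>A. {C. A \<subseteq> C}) As)}"
  by (auto simp: supvecs_def vec_in_def)

lemma finite_supvecs: "finite (supvecs (As :: ('b::finite) set list))"
  unfolding supvecs_vec by (rule finite_vec)

lemma sum_supvecs_snoc:
  fixes h :: "('b::finite) set list \<Rightarrow> real"
  shows "(\<Sum>Bs\<in>supvecs (As@[D]). h Bs) = (\<Sum>Bs\<in>supvecs As. \<Sum>C\<in>{C. D \<subseteq> C}. h (Bs@[C]))"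
  unfolding supvecs_vec by (simp add: sum_vec_snoc)

lemma supvecs_Nil: "supvecs [] = {[]}"
  by (auto simp: supvecs_def)

lemma map2_snoc: "length xs = length As \<Longrightarrow> map2 f (xs@[x]) (As@[A]) = map2 f xs As @ [f x A]"
  by simp

lemma vec_in_menus: "vec_in xs As \<Longrightarrow> As \<in> menus (length As)"
  unfolding vec_in_def menus_def by (auto simp: in_set_conv_nth) (metis empty_iff)

lemma swap_inner: "(\<Sum>Bs\<in>S. \<Sum>rs\<in>P Bs. \<Sum>C\<in>Q. (g Bs rs C :: real)) = (\<Sum>Bs\<in>S. \<Sum>C\<in>Q. \<Sum>rs\<in>P Bs. g Bs rs C)"
  by (rule sum.cong[OF refl]) (rule sum.swap)

lemma grouping:
  fixes h :: "('a::finite) rel list \<Rightarrow> real"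
  assumes "length xs = length As"
  shows "(\<Sum>rs\<in>{rs. vec_in rs (map2 Nset xs As)}. h rs)
       = (\<Sum>Bs\<in>supvecs As. \<Sum>rs\<in>{rs. vec_in rs (map2 Rset xs Bs)}. h rs)"
  using assms
proof (induction xs arbitrary: As h rule: rev_induct)
  case Nil
  then show ?case by (simp add: vec_Nil supvecs_Nil)
next
  case (snoc x xs)
  have "As \<noteq> []" using snoc.prems by auto
  then obtain As' A where As: "As = As' @ [A]" by (metis rev_exhaust)
  then have len: "length xs = length As'" using snoc.prems by simp
  have "(\<Sum>rs\<in>{rs. vec_in rs (map2 Nset (xs@[x]) As)}. h rs)
      = (\<Sum>rs\<in>{rs. vec_in rs (map2 Nset xs As')}. \<Sum>r\<in>Nset x A. h (rs@[r]))"
    using len by (simp add: As sum_vec_snoc)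
  also have "\<dots> = (\<Sum>Bs\<in>supvecs As'. \<Sum>rs\<in>{rs. vec_in rs (map2 Rset xs Bs)}. \<Sum>r\<in>Nset x A. h (rs@[r]))"
    by (rule snoc.IH[OF len])
  also have "\<dots> = (\<Sum>Bs\<in>supvecs As'. \<Sum>rs\<in>{rs. vec_in rs (map2 Rset xs Bs)}. \<Sum>C\<in>{C. A \<subseteq> C}. \<Sum>r\<in>Rset x C. h (rs@[r]))"
    by (simp add: sum_Nset_Rset)
  also have "\<dots> = (\<Sum>Bs\<in>supvecs As'. \<Sum>C\<in>{C. A \<subseteq> C}. \<Sum>rs\<in>{rs. vec_in rs (map2 Rset xs Bs)}. \<Sum>r\<in>Rset x C. h (rs@[r]))"
    by (rule swap_inner)
  also have "\<dots> = (\<Sum>Bs\<in>supvecs As'. \<Sum>C\<in>{C. A \<subseteq> C}. \<Sum>rs\<in>{rs. vec_in rs (map2 Rset (xs@[x]) (Bs@[C]))}. h rs)"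
  proof (rule sum.cong[OF refl], rule sum.cong[OF refl])
    fix Bs C assume "Bs \<in> supvecs As'"
    then have "length xs = length Bs" using len by (simp add: supvecs_def)
    then show "(\<Sum>rs\<in>{rs. vec_in rs (map2 Rset xs Bs)}. \<Sum>r\<in>Rset x C. h (rs@[r]))
        = (\<Sum>rs\<in>{rs. vec_in rs (map2 Rset (xs@[x]) (Bs@[C]))}. h rs)"
      by (simp add: sum_vec_snoc)
  qed
  also have "\<dots> = (\<Sum>Bs\<in>supvecs As. \<Sum>rs\<in>{rs. vec_in rs (map2 Rset (xs@[x]) Bs)}. h rs)"
    by (simp add: As sum_supvecs_snoc)
  finally show ?case .
qed

definition Wt :: "('b list \<Rightarrow> 'a rel list \<Rightarrow> 'a rel pmf) \<Rightarrow> 'b list \<Rightarrow> 'a rel list \<Rightarrow> real" where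
  "Wt t xs rs = (\<Prod>k<length rs. pmf (t (take k xs) (take k rs)) (rs!k))"

lemma Wt_Nil[simp]: "Wt t xs [] = 1"
  by (simp add: Wt_def)

lemma Wt_nonneg: "Wt t xs rs \<ge> 0"
  unfolding Wt_def by (intro prod_nonneg) simp

lemma Wt_snoc:
  assumes "length rs = length xs"
  shows "Wt t (xs@[y]) (rs@[r]) = Wt t xs rs * pmf (t xs rs) r"
proof -
  have "Wt t (xs@[y]) (rs@[r]) = (\<Prod>k<Suc (length rs). pmf (t (take k (xs@[y])) (take k (rs@[r]))) ((rs@[r])!k))"
    by (simp add: Wt_def)
  also have "\<dots> = (\<Prod>k<length rs. pmf (t (take k (xs@[y])) (take k (rs@[r]))) ((rs@[r])!k)) * pmf (t xs rs) r"
    using assms by (simp add: prod.lessThan_Suc nth_append)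
  also have "(\<Prod>k<length rs. pmf (t (take k (xs@[y])) (take k (rs@[r]))) ((rs@[r])!k)) = Wt t xs rs"
    unfolding Wt_def using assms by (intro prod.cong refl) (simp add: nth_append)
  finally show ?thesis .
qed

lemma Wt_cdru:
  assumes "T \<ge> 1" "length rs = T" "length xs = T"
  shows "pmf (t [] []) (rs!0) * (\<Prod>k\<in>{1..<T}. pmf (t (take k xs) (take k rs)) (rs!k)) = Wt t xs rs"
proof -
  have "Wt t xs rs = (\<Prod>k\<in>{0..<T}. pmf (t (take k xs) (take k rs)) (rs!k))"
    unfolding Wt_def using assms by (simp add: atLeast0LessThan)
  also have "\<dots> = pmf (t [] []) (rs!0) * (\<Prod>k\<in>{1..<T}. pmf (t (take k xs) (take k rs)) (rs!k))"
    using assms by (subst prod.atLeast_Suc_lessThan) auto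
  finally show ?thesis by simp
qed

section \<open>Moebius uniqueness\<close>

lemma moebius_unique:
  fixes le :: "'b \<Rightarrow> 'b \<Rightarrow> bool" and f g :: "'b \<Rightarrow> real"
  assumes fin: "finite S"
    and rfl: "\<And>a. a \<in> S \<Longrightarrow> le a a"
    and antis: "\<And>a b. a \<in> S \<Longrightarrow> b \<in> S \<Longrightarrow> le a b \<Longrightarrow> le b a \<Longrightarrow> a = b"
    and trns: "\<And>a b c. a \<in> S \<Longrightarrow> b \<in> S \<Longrightarrow> c \<in> S \<Longrightarrow> le a b \<Longrightarrow> le b c \<Longrightarrow> le a c"
    and eq: "\<And>a. a \<in> S \<Longrightarrow> (\<Sum>b\<in>{b\<in>S. le a b}. f b) = (\<Sum>b\<in>{b\<in>S. le a b}. g b)"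
    and aS: "a \<in> S"
  shows "f a = g a"
  using aS
proof (induction "card {b\<in>S. le a b}" arbitrary: a rule: less_induct)
  case (less a)
  let ?U = "{b\<in>S. le a b}"
  have finU: "finite ?U" using fin by simp
  have aU: "a \<in> ?U" using less.prems rfl by simp
  have IH: "f b = g b" if b: "b \<in> ?U - {a}" for b
  proof -
    have "{c\<in>S. le b c} \<subseteq> ?U" using b trns less.prems by blast
    moreover have "a \<notin> {c\<in>S. le b c}" using b antis less.prems by blast
    ultimately have "{c\<in>S. le b c} \<subset> ?U" using aU by blast
    then have "card {c\<in>S. le b c} < card ?U" by (rule psubset_card_mono[OF finU])
    then show ?thesis using less.hyps b by blast
  qed
  have "f a + (\<Sum>b\<in>?U - {a}. f b) = g a + (\<Sum>b\<in>?U - {a}. g b)"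
    using eq[OF less.prems] sum.remove[OF finU aU, of f] sum.remove[OF finU aU, of g] by simp
  moreover have "(\<Sum>b\<in>?U - {a}. f b) = (\<Sum>b\<in>?U - {a}. g b)"
    using IH by (rule sum.cong[OF refl])
  ultimately show ?case by simp
qed


definition pif :: "('a \<Rightarrow> 'a set \<Rightarrow> real) \<Rightarrow> 'a set \<Rightarrow> real" where
  "pif f R = (\<Sum>x\<in>R. f x R)"

definition gtr :: "('a \<Rightarrow> 'a set \<Rightarrow> real) \<Rightarrow> 'a set \<Rightarrow> 'a \<Rightarrow> real" where
  "gtr f R x = (if (\<forall>z\<in>R. 0 \<le> f z R) \<and> pif f R > 0 then f x R / pif f R else 1 / real (card R))"

fun wp :: "('a \<Rightarrow> 'a set \<Rightarrow> real) \<Rightarrow> 'a set \<Rightarrow> 'a list \<Rightarrow> real" where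
  "wp f R [] = 1"
| "wp f R (x#u) = gtr f R x * wp f (R - {x}) u"

definition perms :: "'a set \<Rightarrow> 'a list set" where
  "perms R = {l. distinct l \<and> set l = R}"

definition rel_of :: "'a list \<Rightarrow> 'a rel" where
  "rel_of l = {(l!i, l!j) | i j. i < j \<and> j < length l}"

definition dens :: "('a::finite \<Rightarrow> 'a set \<Rightarrow> real) \<Rightarrow> 'a rel \<Rightarrow> real" where
  "dens f r = (\<Sum>l\<in>{l\<in>perms UNIV. rel_of l = r}. wp f UNIV l)"

lemma finite_perms: "finite (perms (R::'a::finite set))"
proof -
  have "perms R \<subseteq> {xs. set xs \<subseteq> UNIV \<and> length xs = card R}"
    by (auto simp: perms_def distinct_card)
  moreover have "finite {xs :: 'a list. set xs \<subseteq> UNIV \<and> length xs = card R}"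
    by (rule finite_lists_length_eq) simp
  ultimately show ?thesis by (rule finite_subset)
qed

lemma perms_empty: "perms {} = {[]}"
  by (auto simp: perms_def)

lemma perms_cons:
  assumes "R \<noteq> {}"
  shows "perms R = (\<Union>x\<in>R. Cons x ` perms (R - {x}))"
proof (intro equalityI subsetI)
  fix l assume "l \<in> perms R"
  then have d: "distinct l" and s: "set l = R" by (simp_all add: perms_def)
  have "l \<noteq> []" using s assms by auto
  then obtain x u where l: "l = x#u" by (meson neq_Nil_conv)
  have "x \<in> R" using s l by auto
  moreover have "u \<in> perms (R - {x})" using d s l by (simp add: perms_def) blast
  ultimately show "l \<in> (\<Union>x\<in>R. Cons x ` perms (R - {x}))" using l by blast
next
  fix l assume "l \<in> (\<Union>x\<in>R. Cons x ` perms (R - {x}))"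
  then obtain x u where x: "x \<in> R" and u: "u \<in> perms (R - {x})" and l: "l = x#u" by blast
  have "distinct l" using u l by (simp add: perms_def)
  moreover have "set l = R" using u l x by (simp add: perms_def) blast
  ultimately show "l \<in> perms R" by (simp add: perms_def)
qed

lemma perms_snoc:
  assumes "R \<noteq> {}"
  shows "perms R = (\<Union>y\<in>R. (\<lambda>u. u @ [y]) ` perms (R - {y}))"
proof (intro equalityI subsetI)
  fix l assume "l \<in> perms R"
  then have d: "distinct l" and s: "set l = R" by (simp_all add: perms_def)
  have "l \<noteq> []" using s assms by auto
  then obtain y u where l: "l = u @ [y]" by (metis rev_exhaust)
  have "y \<in> R" using s l by auto
  moreover have "u \<in> perms (R - {y})" using d s l by (simp add: perms_def) blast
  ultimately show "l \<in> (\<Union>y\<in>R. (\<lambda>u. u @ [y]) ` perms (R - {y}))" using l by blast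
next
  fix l assume "l \<in> (\<Union>y\<in>R. (\<lambda>u. u @ [y]) ` perms (R - {y}))"
  then obtain y u where y: "y \<in> R" and u: "u \<in> perms (R - {y})" and l: "l = u @ [y]" by blast
  have "distinct l" using u l by (simp add: perms_def)
  moreover have "set l = R" using u l y by (simp add: perms_def) blast
  ultimately show "l \<in> perms R" by (simp add: perms_def)
qed

lemma gtr_nonneg: "x \<in> R \<Longrightarrow> 0 \<le> gtr f R x"
  by (auto simp: gtr_def)

lemma gtr_sum:
  assumes "finite R" "R \<noteq> {}"
  shows "(\<Sum>x\<in>R. gtr f R x) = 1"
proof (cases "(\<forall>z\<in>R. 0 \<le> f z R) \<and> pif f R > 0")
  case True
  then have "(\<Sum>x\<in>R. gtr f R x) = (\<Sum>x\<in>R. f x R) / pif f R"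
    by (simp add: gtr_def sum_divide_distrib)
  also have "\<dots> = 1" using True by (simp add: pif_def)
  finally show ?thesis .
next
  case False
  then have "\<forall>x\<in>R. gtr f R x = 1 / real (card R)"
    unfolding gtr_def by (intro ballI) (rule if_not_P)
  then have "(\<Sum>x\<in>R. gtr f R x) = (\<Sum>x\<in>R. 1 / real (card R))" by simp
  also have "\<dots> = real (card R) * (1 / real (card R))" by simp
  also have "\<dots> = 1" using assms by (simp add: card_gt_0_iff)
  finally show ?thesis .
qed

lemma wp_nonneg: "distinct l \<Longrightarrow> set l \<subseteq> R \<Longrightarrow> 0 \<le> wp f R l"
proof (induction l arbitrary: R)
  case Nil then show ?case by simp
next
  case (Cons x u)
  have "0 \<le> gtr f R x" using Cons.prems by (intro gtr_nonneg) simp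
  moreover have "0 \<le> wp f (R - {x}) u" using Cons.prems by (intro Cons.IH) auto
  ultimately show ?case by simp
qed

lemma wp_sum: "(\<Sum>l\<in>perms (R::'a::finite set). wp f R l) = 1"
proof (induction "card R" arbitrary: R rule: less_induct)
  case less
  show ?case
  proof (cases "R = {}")
    case True then show ?thesis by (simp add: perms_empty)
  next
    case False
    have "(\<Sum>l\<in>perms R. wp f R l) = (\<Sum>x\<in>R. \<Sum>l\<in>Cons x ` perms (R - {x}). wp f R l)"
      unfolding perms_cons[OF False]
      by (rule sum.UNION_disjoint) (auto simp: finite_perms)
    also have "\<dots> = (\<Sum>x\<in>R. \<Sum>u\<in>perms (R - {x}). gtr f R x * wp f (R - {x}) u)"
    proof (rule sum.cong[OF refl])
      fix x assume "x \<in> R"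
      show "(\<Sum>l\<in>Cons x ` perms (R - {x}). wp f R l) = (\<Sum>u\<in>perms (R - {x}). gtr f R x * wp f (R - {x}) u)"
        by (subst sum.reindex) auto
    qed
    also have "\<dots> = (\<Sum>x\<in>R. gtr f R x)"
    proof (intro sum.cong refl)
      fix x assume "x \<in> R"
      then have "card (R - {x}) < card R" by (intro card_Diff1_less) simp_all
      then have "(\<Sum>u\<in>perms (R - {x}). wp f (R - {x}) u) = 1" by (rule less.hyps)
      then show "(\<Sum>u\<in>perms (R - {x}). gtr f R x * wp f (R - {x}) u) = gtr f R x"
        by (simp add: sum_distrib_left[symmetric])
    qed
    also have "\<dots> = 1" by (rule gtr_sum) (simp_all add: False)
    finally show ?thesis .
  qed
qed

lemma wp_append: "wp f R (u @ v) = wp f R u * wp f (R - set u) v"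
proof (induction u arbitrary: R)
  case Nil then show ?case by simp
next
  case (Cons x u)
  have e: "R - insert x (set u) = R - {x} - set u" by auto
  show ?case using Cons.IH[of "R - {x}"] by (simp add: e mult.assoc)
qed

lemma rel_of_lorder:
  assumes "l \<in> perms (UNIV::'a set)"
  shows "rel_of l \<in> lorders"
proof -
  have d: "distinct l" and s: "set l = UNIV" using assms by (auto simp: perms_def)
  have tr: "trans (rel_of l)"
  proof (rule transI)
    fix a b c assume "(a,b) \<in> rel_of l" "(b,c) \<in> rel_of l"
    then obtain i j i' j' where ij: "i < j" "j < length l" "a = l!i" "b = l!j"
      and ij': "i' < j'" "j' < length l" "b = l!i'" "c = l!j'"
      unfolding rel_of_def by blast
    then have "j = i'" using d nth_eq_iff_index_eq[OF d, of j i'] by auto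
    then show "(a,c) \<in> rel_of l" using ij ij' unfolding rel_of_def by force
  qed
  have ir0: "(a,a) \<notin> rel_of l" for a
  proof
    assume "(a,a) \<in> rel_of l"
    then obtain i j where ij: "i < j" "j < length l" "l!i = l!j"
      unfolding rel_of_def by blast
    then show False using nth_eq_iff_index_eq[OF d, of i j] by auto
  qed
  have ir: "irrefl (rel_of l)" using ir0 by (simp add: irrefl_def)
  have to: "total (rel_of l)"
  proof (rule total_onI)
    fix a b :: 'a assume "a \<noteq> b"
    obtain i where i: "i < length l" "l!i = a" using s by (metis UNIV_I in_set_conv_nth)
    obtain j where j: "j < length l" "l!j = b" using s by (metis UNIV_I in_set_conv_nth)
    have "i \<noteq> j" using i j \<open>a \<noteq> b\<close> by auto
    then have "i < j \<or> j < i" by arith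
    then show "(a,b) \<in> rel_of l \<or> (b,a) \<in> rel_of l"
      using i j unfolding rel_of_def by blast
  qed
  show ?thesis using tr ir to
    by (simp add: lorders_def strict_linear_order_on_def)
qed

lemma rel_of_iff: "(a,b) \<in> rel_of l \<longleftrightarrow> (\<exists>i j. i < j \<and> j < length l \<and> l!i = a \<and> l!j = b)"
  unfolding rel_of_def by blast

lemma low_rel_of:
  assumes d: "distinct (u @ y # v)"
  shows "low y (rel_of (u @ y # v)) = insert y (set v)"
proof -
  let ?l = "u @ y # v"
  have yl: "?l ! length u = y" by simp
  have "{z. (y,z) \<in> rel_of ?l} = set v"
  proof (intro equalityI subsetI)
    fix z assume "z \<in> {z. (y,z) \<in> rel_of ?l}"
    then have "\<exists>i j. i < j \<and> j < length ?l \<and> ?l!i = y \<and> ?l!j = z" by (simp only: mem_Collect_eq rel_of_iff)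
    then obtain i j where ij: "i < j" "j < length ?l" "?l!i = y" "?l!j = z" by blast
    have ul: "length u < length ?l" by simp
    have il: "i < length ?l" using ij(1,2) by linarith
    have "?l!i = ?l!(length u) \<longleftrightarrow> i = length u" by (rule nth_eq_iff_index_eq[OF d il ul])
    then have "i = length u" using ij(3) yl by simp
    define k where "k = j - Suc (length u)"
    have k: "j = length u + Suc k" using ij(1) \<open>i = length u\<close> unfolding k_def by arith
    then have "?l ! j = v ! k" by (simp only: nth_append_length_plus nth_Cons_Suc)
    moreover have "k < length v" using k ij(2) by simp
    ultimately have "z = v ! k" "k < length v" using ij(4) by simp_all
    then show "z \<in> set v" by simp
  next
    fix z assume "z \<in> set v"
    then obtain k where k: "k < length v" "v ! k = z" by (metis in_set_conv_nth)
    have "?l ! (length u + Suc k) = v ! k" by (simp only: nth_append_length_plus nth_Cons_Suc)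
    then have "?l ! (length u + Suc k) = z" using k by simp
    moreover have "length u < length u + Suc k" "length u + Suc k < length ?l" using k by simp_all
    ultimately have "\<exists>i j. i < j \<and> j < length ?l \<and> ?l!i = y \<and> ?l!j = z" using yl by blast
    then show "z \<in> {z. (y,z) \<in> rel_of ?l}" by (simp only: mem_Collect_eq rel_of_iff)
  qed
  then show ?thesis by (simp add: low_def)
qed

lemma perms_low_image:
  fixes y :: "'a::finite"
  assumes yC: "y \<in> C"
  shows "{l \<in> perms UNIV. low y (rel_of l) = C} = (\<lambda>(u,v). u @ y # v) ` (perms (UNIV - C) \<times> perms (C - {y}))"
proof (intro equalityI subsetI)
  fix l assume "l \<in> {l \<in> perms UNIV. low y (rel_of l) = C}"
  then have d: "distinct l" and s: "set l = UNIV" and lo: "low y (rel_of l) = C"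
    by (auto simp: perms_def)
  obtain u v where l: "l = u @ y # v" using s by (metis UNIV_I split_list)
  have "low y (rel_of l) = insert y (set v)" using d unfolding l by (rule low_rel_of)
  then have C: "C = insert y (set v)" using lo by simp
  have "set u = UNIV - C" using d s l C by auto
  moreover have "set v = C - {y}" using d l C by auto
  ultimately have "u \<in> perms (UNIV - C)" "v \<in> perms (C - {y})" using d l by (auto simp: perms_def)
  then show "l \<in> (\<lambda>(u,v). u @ y # v) ` (perms (UNIV - C) \<times> perms (C - {y}))"
    using l by (intro image_eqI[where x="(u,v)"]) auto
next
  fix l assume "l \<in> (\<lambda>(u,v). u @ y # v) ` (perms (UNIV - C) \<times> perms (C - {y}))"
  then obtain p where p: "p \<in> perms (UNIV - C) \<times> perms (C - {y})" "l = (\<lambda>(u,v). u @ y # v) p"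
    by (rule imageE) simp
  obtain u v where uv: "p = (u,v)" by (cases p)
  have l: "l = u @ y # v" and u: "u \<in> perms (UNIV - C)" and v: "v \<in> perms (C - {y})"
    using p uv by simp_all
  have d: "distinct l" using u v yC l by (auto simp: perms_def)
  moreover have "set l = UNIV" using u v yC l by (auto simp: perms_def)
  moreover have "low y (rel_of l) = C"
  proof -
    have "low y (rel_of l) = insert y (set v)" using d unfolding l by (rule low_rel_of)
    also have "insert y (set v) = C" using v yC by (auto simp: perms_def)
    finally show ?thesis .
  qed
  ultimately show "l \<in> {l \<in> perms UNIV. low y (rel_of l) = C}" by (simp add: perms_def)
qed

lemma inj_mid:
  assumes yC: "y \<in> C"
  shows "inj_on (\<lambda>(u,v). u @ y # v) (perms (UNIV - C) \<times> perms (C - {y}))"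
proof (rule inj_onI, clarify)
  fix u v u' v' assume u: "u \<in> perms (UNIV - C)" and v: "v \<in> perms (C - {y})"
    and "u' \<in> perms (UNIV - C)" "v' \<in> perms (C - {y})" and eq: "u @ y # v = u' @ y # v'"
  have "y \<notin> set u" "y \<notin> set v" using u v yC by (auto simp: perms_def)
  then show "u = u' \<and> v = v'" using eq append_Cons_eq_iff by metis
qed

lemma event_sum:
  fixes y :: "'a::finite"
  assumes yC: "y \<in> C"
  shows "(\<Sum>l\<in>{l \<in> perms UNIV. low y (rel_of l) = C}. wp f UNIV l)
       = (\<Sum>u\<in>perms (UNIV - C). wp f UNIV u) * gtr f C y"
proof -
  have "(\<Sum>l\<in>{l \<in> perms UNIV. low y (rel_of l) = C}. wp f UNIV l)
      = (\<Sum>(u,v)\<in>perms (UNIV - C) \<times> perms (C - {y}). wp f UNIV (u @ y # v))"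
    unfolding perms_low_image[OF yC]
    by (subst sum.reindex[OF inj_mid[OF yC]]) (simp add: case_prod_unfold)
  also have "\<dots> = (\<Sum>u\<in>perms (UNIV - C). \<Sum>v\<in>perms (C - {y}). wp f UNIV u * (gtr f C y * wp f (C - {y}) v))"
    unfolding sum.cartesian_product[symmetric]
  proof (intro sum.cong refl)
    fix u v assume u: "u \<in> perms (UNIV - C)"
    then have "UNIV - set u = C" by (auto simp: perms_def)
    then show "wp f UNIV (u @ y # v) = wp f UNIV u * (gtr f C y * wp f (C - {y}) v)"
      by (simp add: wp_append)
  qed
  also have "\<dots> = (\<Sum>u\<in>perms (UNIV - C). wp f UNIV u * gtr f C y)"
    by (simp add: sum_distrib_left[symmetric] wp_sum)
  also have "\<dots> = (\<Sum>u\<in>perms (UNIV - C). wp f UNIV u) * gtr f C y"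
    by (simp add: sum_distrib_right)
  finally show ?thesis .
qed

lemma pif_gtr:
  assumes nn: "\<And>z. z \<in> R \<Longrightarrow> 0 \<le> f z R" and y: "y \<in> R" and fin: "finite R"
  shows "pif f R * gtr f R y = f y R"
proof (cases "pif f R > 0")
  case True
  have "\<forall>z\<in>R. 0 \<le> f z R" using nn by blast
  then have "gtr f R y = f y R / pif f R" using True unfolding gtr_def by (intro if_P) blast
  then show ?thesis using True by simp
next
  case False
  have ge: "pif f R \<ge> 0" unfolding pif_def using nn by (intro sum_nonneg) blast
  then have z: "pif f R = 0" using False by linarith
  have "sum (\<lambda>x. f x R) R = 0" using z unfolding pif_def .
  then have "\<forall>z\<in>R. f z R = 0" using sum_nonneg_eq_0_iff[OF fin, of "\<lambda>x. f x R"] nn by simp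
  then have "f y R = 0" using y by blast
  then show ?thesis using z by simp
qed

section \<open>Flow conservation\<close>

lemma flow_sum_reindex:
  fixes f :: "'a::finite \<Rightarrow> 'a set \<Rightarrow> real"
  shows "(\<Sum>D\<in>{D. R \<subseteq> D}. \<Sum>y\<in>-D. f y (insert y D)) = (\<Sum>E\<in>{E. R \<subseteq> E}. \<Sum>y\<in>E - R. f y E)"
proof -
  have "(\<Sum>D\<in>{D. R \<subseteq> D}. \<Sum>y\<in>-D. f y (insert y D)) = (\<Sum>(D,y)\<in>Sigma {D. R \<subseteq> D} (\<lambda>D. -D). f y (insert y D))"
    by (rule sum.Sigma[of "{D. R \<subseteq> D}" "\<lambda>D. -D" "\<lambda>D y. f y (insert y D)"]) simp_all
  also have "\<dots> = (\<Sum>(E,y)\<in>Sigma {E. R \<subseteq> E} (\<lambda>E. E - R). f y E)"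
  proof (rule sum.reindex_bij_witness[where i="\<lambda>(E,y). (E - {y}, y)" and j="\<lambda>(D,y). (insert y D, y)"])
    fix a assume "a \<in> Sigma {D. R \<subseteq> D} (\<lambda>D. -D)"
    then obtain D y where a: "a = (D,y)" "R \<subseteq> D" "y \<notin> D" by blast
    have "insert y D - {y} = D" using a(3) by blast
    then show "(\<lambda>(E,y). (E - {y}, y)) ((\<lambda>(D,y). (insert y D, y)) a) = a" using a(1) by simp
    have "R \<subseteq> insert y D" "y \<in> insert y D - R" using a(2,3) by blast+
    then show "(\<lambda>(D,y). (insert y D, y)) a \<in> Sigma {E. R \<subseteq> E} (\<lambda>E. E - R)" using a(1) by simp
    show "(\<lambda>(E,y). f y E) ((\<lambda>(D,y). (insert y D, y)) a) = (\<lambda>(D,y). f y (insert y D)) a"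
      using a(1) by simp
  next
    fix b assume "b \<in> Sigma {E. R \<subseteq> E} (\<lambda>E. E - R)"
    then obtain E y where b: "b = (E,y)" "R \<subseteq> E" "y \<in> E" "y \<notin> R" by blast
    have "insert y (E - {y}) = E" using b(3) by blast
    then show "(\<lambda>(D,y). (insert y D, y)) ((\<lambda>(E,y). (E - {y}, y)) b) = b" using b(1) by simp
    have "R \<subseteq> E - {y}" "y \<notin> E - {y}" using b(2,4) by blast+
    then show "(\<lambda>(E,y). (E - {y}, y)) b \<in> Sigma {D. R \<subseteq> D} (\<lambda>D. -D)" using b(1) by simp
  qed
  also have "\<dots> = (\<Sum>E\<in>{E. R \<subseteq> E}. \<Sum>y\<in>E - R. f y E)"
    by (rule sum.Sigma[of "{E. R \<subseteq> E}" "\<lambda>E. E - R" "\<lambda>E y. f y E", symmetric]) simp_all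
  finally show ?thesis .
qed

context
  fixes f :: "'a::finite \<Rightarrow> 'a set \<Rightarrow> real"
  assumes nn: "\<And>y C. y \<in> C \<Longrightarrow> 0 \<le> f y C"
    and bm: "\<And>D. D \<noteq> {} \<Longrightarrow> (\<Sum>y\<in>D. \<Sum>C\<in>{C. D \<subseteq> C}. f y C) = 1"
begin

lemma flow:
  assumes "C \<noteq> {}"
  shows "pif f C - (\<Sum>y\<in>-C. f y (insert y C)) = (if C = UNIV then 1 else 0)"
proof (rule moebius_unique[where S="{D. D \<noteq> {}}" and le="(\<subseteq>)" and a=C
    and f="\<lambda>D. pif f D - (\<Sum>y\<in>-D. f y (insert y D))" and g="\<lambda>D. if D = UNIV then 1 else 0"])
  show "C \<in> {D. D \<noteq> {}}" using assms by simp
  fix R assume R: "R \<in> {D::'a set. D \<noteq> {}}"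
  have S: "{b \<in> {D. D \<noteq> {}}. R \<subseteq> b} = {D. R \<subseteq> D}" using R by auto
  have "(\<Sum>D\<in>{D. R \<subseteq> D}. pif f D - (\<Sum>y\<in>-D. f y (insert y D)))
      = (\<Sum>E\<in>{E. R \<subseteq> E}. pif f E - (\<Sum>y\<in>E - R. f y E))"
    by (simp only: sum_subtractf flow_sum_reindex)
  also have "\<dots> = (\<Sum>E\<in>{E. R \<subseteq> E}. \<Sum>y\<in>R. f y E)"
  proof (intro sum.cong refl)
    fix E assume "E \<in> {E. R \<subseteq> E}"
    then have "pif f E = (\<Sum>y\<in>E - R. f y E) + (\<Sum>y\<in>R. f y E)"
      unfolding pif_def by (intro sum.subset_diff) auto
    then show "pif f E - (\<Sum>y\<in>E - R. f y E) = (\<Sum>y\<in>R. f y E)" by simp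
  qed
  also have "\<dots> = (\<Sum>y\<in>R. \<Sum>E\<in>{E. R \<subseteq> E}. f y E)"
    by (rule sum.swap)
  also have "\<dots> = 1" using bm R by blast
  also have "\<dots> = (\<Sum>D\<in>{D. R \<subseteq> D}. if D = UNIV then 1 else 0)"
    by (subst sum.delta) simp_all
  finally show "(\<Sum>b\<in>{b \<in> {D. D \<noteq> {}}. R \<subseteq> b}. pif f b - (\<Sum>y\<in>-b. f y (insert y b)))
      = (\<Sum>b\<in>{b \<in> {D. D \<noteq> {}}. R \<subseteq> b}. if b = UNIV then 1 else 0)"
    unfolding S .
next
  show "finite {D::'a set. D \<noteq> {}}" by simp
qed blast+

lemma reach_prob:
  assumes "C \<noteq> {}"
  shows "(\<Sum>u\<in>perms (UNIV - C). wp f UNIV u) = pif f C"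
  using assms
proof (induction "card (UNIV - C)" arbitrary: C rule: less_induct)
  case less
  show ?case
  proof (cases "C = UNIV")
    case True
    have "{C::'a set. UNIV \<subseteq> C} = {UNIV}" by auto
    then have "pif f UNIV = 1" using bm[of UNIV] by (simp add: pif_def)
    then show ?thesis using True by (simp add: perms_empty)
  next
    case False
    then have ne: "UNIV - C \<noteq> {}" by auto
    have "(\<Sum>u\<in>perms (UNIV - C). wp f UNIV u)
        = (\<Sum>y\<in>UNIV - C. \<Sum>u\<in>(\<lambda>u. u @ [y]) ` perms (UNIV - C - {y}). wp f UNIV u)"
      unfolding perms_snoc[OF ne]
      by (rule sum.UNION_disjoint) (auto simp: finite_perms)
    also have "\<dots> = (\<Sum>y\<in>UNIV - C. \<Sum>u\<in>perms (UNIV - insert y C). wp f UNIV u * gtr f (insert y C) y)"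
    proof (rule sum.cong[OF refl])
      fix y assume y: "y \<in> UNIV - C"
      have eq: "UNIV - C - {y} = UNIV - insert y C" by auto
      have "(\<Sum>u\<in>(\<lambda>u. u @ [y]) ` perms (UNIV - C - {y}). wp f UNIV u)
          = (\<Sum>u\<in>perms (UNIV - insert y C). wp f UNIV (u @ [y]))"
        unfolding eq by (subst sum.reindex) (auto simp: inj_on_def)
      also have "\<dots> = (\<Sum>u\<in>perms (UNIV - insert y C). wp f UNIV u * gtr f (insert y C) y)"
      proof (intro sum.cong refl)
        fix u assume "u \<in> perms (UNIV - insert y C)"
        then have "UNIV - set u = insert y C" by (auto simp: perms_def)
        then show "wp f UNIV (u @ [y]) = wp f UNIV u * gtr f (insert y C) y"
          by (simp add: wp_append)
      qed
      finally show "(\<Sum>u\<in>(\<lambda>u. u @ [y]) ` perms (UNIV - C - {y}). wp f UNIV u)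
          = (\<Sum>u\<in>perms (UNIV - insert y C). wp f UNIV u * gtr f (insert y C) y)" .
    qed
    also have "\<dots> = (\<Sum>y\<in>UNIV - C. pif f (insert y C) * gtr f (insert y C) y)"
    proof (rule sum.cong[OF refl])
      fix y assume y: "y \<in> UNIV - C"
      have "card (UNIV - insert y C) < card (UNIV - C)"
        using y by (intro psubset_card_mono) auto
      then have "(\<Sum>u\<in>perms (UNIV - insert y C). wp f UNIV u) = pif f (insert y C)"
        using less.hyps by blast
      then show "(\<Sum>u\<in>perms (UNIV - insert y C). wp f UNIV u * gtr f (insert y C) y)
          = pif f (insert y C) * gtr f (insert y C) y"
        by (simp add: sum_distrib_right[symmetric])
    qed
    also have "\<dots> = (\<Sum>y\<in>UNIV - C. f y (insert y C))"
      by (intro sum.cong refl pif_gtr nn) auto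
    also have "\<dots> = pif f C"
      using flow[OF less.prems] False by (simp add: Compl_eq_Diff_UNIV)
    finally show ?thesis .
  qed
qed

end

definition falm :: "('a::finite \<Rightarrow> 'a set \<Rightarrow> real) \<Rightarrow> 'a rel pmf" where
  "falm f = embed_pmf (dens f)"

lemma dens_nonneg: "0 \<le> dens f r"
  unfolding dens_def by (intro sum_nonneg wp_nonneg) (auto simp: perms_def)

lemma dens_sum: "(\<Sum>r\<in>UNIV. dens f r) = 1"
proof -
  have "(\<Sum>r\<in>UNIV. dens f r) = (\<Sum>l\<in>perms UNIV. wp f UNIV l)"
    unfolding dens_def by (rule sum.group) (auto simp: finite_perms)
  then show ?thesis by (simp add: wp_sum)
qed

lemma pmf_falm: "pmf (falm f) r = dens f r"
proof -
  have "(\<integral>\<^sup>+x. ennreal (dens f x) \<partial>count_space UNIV) = 1"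
    by (simp add: nn_integral_count_space_finite dens_nonneg dens_sum)
  then show ?thesis unfolding falm_def by (intro pmf_embed_pmf dens_nonneg)
qed

lemma falm_support: "set_pmf (falm f) \<subseteq> lorders"
proof
  fix r assume "r \<in> set_pmf (falm f)"
  then have "dens f r \<noteq> 0" by (simp add: set_pmf_iff pmf_falm)
  have "{l\<in>perms UNIV. rel_of l = r} \<noteq> {}"
  proof
    assume e: "{l\<in>perms UNIV. rel_of l = r} = {}"
    have "dens f r = 0" unfolding dens_def e by simp
    with \<open>dens f r \<noteq> 0\<close> show False by simp
  qed
  then obtain l where "l \<in> perms UNIV" "rel_of l = r" by auto
  then show "r \<in> lorders" using rel_of_lorder by blast
qed

lemma falm_prop:
  fixes f :: "'a::finite \<Rightarrow> 'a set \<Rightarrow> real"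
  assumes nn: "\<And>y C. y \<in> C \<Longrightarrow> 0 \<le> f y C"
    and bm: "\<And>D. D \<noteq> {} \<Longrightarrow> (\<Sum>y\<in>D. \<Sum>C\<in>{C. D \<subseteq> C}. f y C) = 1"
    and yC: "y \<in> C"
  shows "(\<Sum>r\<in>Rset y C. pmf (falm f) r) = f y C"
proof -
  have "(\<Sum>r\<in>Rset y C. pmf (falm f) r) = (\<Sum>r\<in>Rset y C. \<Sum>l\<in>{l\<in>perms UNIV. rel_of l = r}. wp f UNIV l)"
    by (simp add: pmf_falm dens_def)
  also have "\<dots> = (\<Sum>r\<in>Rset y C. \<Sum>l\<in>{l\<in>{l \<in> perms UNIV. low y (rel_of l) = C}. rel_of l = r}. wp f UNIV l)"
    by (intro sum.cong refl) (auto simp: Rset_def)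
  also have "\<dots> = (\<Sum>l\<in>{l \<in> perms UNIV. low y (rel_of l) = C}. wp f UNIV l)"
    by (rule sum.group) (auto simp: finite_perms Rset_def rel_of_lorder)
  also have "\<dots> = (\<Sum>u\<in>perms (UNIV - C). wp f UNIV u) * gtr f C y"
    by (rule event_sum[OF yC])
  also have "\<dots> = pif f C * gtr f C y"
    using reach_prob[OF nn bm] yC by auto
  also have "\<dots> = f y C"
    using pif_gtr[of C f y] nn yC by simp
  finally show ?thesis .
qed


lemma vec_map2:
  assumes "vec_in rs (map2 F xs As)" "length xs = length As"
  shows "length rs = length xs" "\<And>i. i < length xs \<Longrightarrow> rs!i \<in> F (xs!i) (As!i)"
  using assms by (auto simp: vec_in_def)

lemma vec_Nset_lorders:
  assumes "vec_in rs (map2 Nset xs As)" "length xs = length As"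
  shows "set rs \<subseteq> lorders"
proof
  fix r assume "r \<in> set rs"
  then obtain i where i: "i < length rs" "rs!i = r" by (metis in_set_conv_nth)
  have "i < length xs" using i vec_map2(1)[OF assms] by simp
  then have "rs!i \<in> Nset (xs!i) (As!i)" using vec_map2(2)[OF assms] by blast
  then show "r \<in> lorders" using i by (simp add: Nset_def)
qed

lemma vec_Rset_low:
  assumes "vec_in rs (map2 Rset xs Bs)" "length xs = length Bs"
  shows "map2 low xs rs = Bs"
proof (rule nth_equalityI)
  have l: "length rs = length xs" by (rule vec_map2(1)[OF assms])
  then show "length (map2 low xs rs) = length Bs" using assms(2) by simp
  fix i assume "i < length (map2 low xs rs)"
  then have i: "i < length xs" using l by simp
  then have "rs!i \<in> Rset (xs!i) (Bs!i)" using vec_map2(2)[OF assms] by blast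
  then show "map2 low xs rs ! i = Bs ! i" using i l by (simp add: Rset_def)
qed

lemma UNIV_supsets: "{C::'a set. UNIV \<subseteq> C} = {UNIV}"
  by auto

lemma supvecs_vec_in: "vec_in xs As \<Longrightarrow> Bs \<in> supvecs As \<Longrightarrow> vec_in xs Bs"
  by (auto simp: vec_in_def supvecs_def)

lemma swap_distrib:
  fixes W :: "'c \<Rightarrow> real"
  shows "(\<Sum>y\<in>B. \<Sum>rs\<in>V. \<Sum>r\<in>N y. W rs * P rs r) = (\<Sum>rs\<in>V. W rs * (\<Sum>y\<in>B. \<Sum>r\<in>N y. P rs r))"
proof -
  have "(\<Sum>y\<in>B. \<Sum>rs\<in>V. \<Sum>r\<in>N y. W rs * P rs r) = (\<Sum>rs\<in>V. \<Sum>y\<in>B. \<Sum>r\<in>N y. W rs * P rs r)"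
    by (rule sum.swap)
  also have "\<dots> = (\<Sum>rs\<in>V. W rs * (\<Sum>y\<in>B. \<Sum>r\<in>N y. P rs r))"
    by (simp add: sum_distrib_left)
  finally show ?thesis .
qed

section \<open>Necessity\<close>

lemma cdru_marg_formula:
  fixes p :: "'a::finite list \<Rightarrow> 'a set list \<Rightarrow> real" and t :: "'a list \<Rightarrow> 'a rel list \<Rightarrow> 'a rel pmf"
  assumes H: "\<And>As xs. As \<in> menus T \<Longrightarrow> vec_in xs As \<Longrightarrow>
      p xs As = (\<Sum>rs\<in>{rs. vec_in rs (map2 Nset xs As)}. Wt t xs rs)"
    and S: "\<And>xs rs. length xs = length rs \<Longrightarrow> 1 \<le> length xs \<Longrightarrow> length xs < T \<Longrightarrow>
      set rs \<subseteq> lorders \<Longrightarrow> set_pmf (t xs rs) \<subseteq> lorders"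
  shows "length As + n = T \<Longrightarrow> 1 \<le> length As \<Longrightarrow> vec_in xs As \<Longrightarrow>
      marg p n xs As = (\<Sum>rs\<in>{rs. vec_in rs (map2 Nset xs As)}. Wt t xs rs)"
proof (induction n arbitrary: xs As)
  case 0
  have "As \<in> menus T" using vec_in_menus[OF 0(3)] 0(1) by simp
  then show ?case using H 0(3) by simp
next
  case (Suc n)
  have len: "length xs = length As" using Suc.prems(3) by (rule vec_in_length)
  let ?V = "{rs. vec_in rs (map2 Nset xs As)}"
  have "marg p (Suc n) xs As = (\<Sum>y\<in>UNIV. marg p n (xs@[y]) (As@[UNIV]))" by simp
  also have "\<dots> = (\<Sum>y\<in>UNIV. \<Sum>rs\<in>{rs. vec_in rs (map2 Nset (xs@[y]) (As@[UNIV]))}. Wt t (xs@[y]) rs)"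
  proof (rule sum.cong[OF refl])
    fix y :: 'a
    show "marg p n (xs@[y]) (As@[UNIV]) = (\<Sum>rs\<in>{rs. vec_in rs (map2 Nset (xs@[y]) (As@[UNIV]))}. Wt t (xs@[y]) rs)"
    proof (rule Suc.IH)
      show "length (As@[UNIV]) + n = T" using Suc.prems(1) by simp
      show "1 \<le> length (As@[UNIV])" by simp
      show "vec_in (xs@[y]) (As@[UNIV])" using Suc.prems(3) by (simp add: vec_in_snoc)
    qed
  qed
  also have "\<dots> = (\<Sum>y\<in>UNIV. \<Sum>rs\<in>?V. \<Sum>r\<in>Nset y UNIV. Wt t xs rs * pmf (t xs rs) r)"
  proof (rule sum.cong[OF refl])
    fix y :: 'a
    have "(\<Sum>rs\<in>{rs. vec_in rs (map2 Nset (xs@[y]) (As@[UNIV]))}. Wt t (xs@[y]) rs)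
        = (\<Sum>rs\<in>?V. \<Sum>r\<in>Nset y UNIV. Wt t (xs@[y]) (rs@[r]))"
      using len by (simp add: sum_vec_snoc)
    also have "\<dots> = (\<Sum>rs\<in>?V. \<Sum>r\<in>Nset y UNIV. Wt t xs rs * pmf (t xs rs) r)"
    proof (rule sum.cong[OF refl])
      fix rs assume "rs \<in> ?V"
      then have "length rs = length xs" using vec_map2(1)[OF _ len] by blast
      then show "(\<Sum>r\<in>Nset y UNIV. Wt t (xs@[y]) (rs@[r])) = (\<Sum>r\<in>Nset y UNIV. Wt t xs rs * pmf (t xs rs) r)"
        by (simp add: Wt_snoc)
    qed
    finally show "(\<Sum>rs\<in>{rs. vec_in rs (map2 Nset (xs@[y]) (As@[UNIV]))}. Wt t (xs@[y]) rs)
        = (\<Sum>rs\<in>?V. \<Sum>r\<in>Nset y UNIV. Wt t xs rs * pmf (t xs rs) r)" .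
  qed
  also have "\<dots> = (\<Sum>rs\<in>?V. Wt t xs rs * (\<Sum>y\<in>UNIV. \<Sum>r\<in>Nset y UNIV. pmf (t xs rs) r))"
    by (rule swap_distrib)
  also have "\<dots> = (\<Sum>rs\<in>?V. Wt t xs rs)"
  proof (rule sum.cong[OF refl])
    fix rs assume rs: "rs \<in> ?V"
    have "(\<Sum>y\<in>UNIV. \<Sum>r\<in>Nset y UNIV. pmf (t xs rs) r) = (\<Sum>r\<in>lorders. pmf (t xs rs) r)"
      by (rule sum_Nset_partition) simp
    also have "\<dots> = 1"
    proof (rule sum_pmf_eq_1)
      show "finite (lorders :: 'a rel set)" by simp
      have "length rs = length xs" using rs vec_map2(1)[OF _ len] by blast
      moreover have "set rs \<subseteq> lorders" using rs vec_Nset_lorders[OF _ len] by blast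
      ultimately show "set_pmf (t xs rs) \<subseteq> lorders"
        using S[of xs rs] Suc.prems(1,2) len by simp
    qed
    finally show "Wt t xs rs * (\<Sum>y\<in>UNIV. \<Sum>r\<in>Nset y UNIV. pmf (t xs rs) r) = Wt t xs rs" by simp
  qed
  finally show ?case .
qed

lemma necessity:
  fixes p :: "'a::finite list \<Rightarrow> 'a set list \<Rightarrow> real"
  assumes T1: "T \<ge> 1" and c: "cdru T p"
  shows "marginality T p \<and> complete_monotone T p"
proof -
  obtain nu :: "'a rel pmf" and t :: "'a list \<Rightarrow> 'a rel list \<Rightarrow> 'a rel pmf" where
    nu: "set_pmf nu \<subseteq> lorders" and
    ts: "\<forall>n \<in> {1..T-1}. \<forall>xs rs. length xs = n \<longrightarrow> length rs = n \<longrightarrow> set rs \<subseteq> lorders \<longrightarrow>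
          set_pmf (t xs rs) \<subseteq> lorders" and
    eq: "\<forall>As \<in> menus T. \<forall>xs. vec_in xs As \<longrightarrow>
          p xs As = (\<Sum>rs \<in> {rs. vec_in rs (map2 Nset xs As)}.
                       pmf nu (rs ! 0) *
                       (\<Prod>k \<in> {1..<T}. pmf (t (take k xs) (take k rs)) (rs ! k)))"
    using c unfolding cdru_def by blast
  define t' where "t' = (\<lambda>xs rs. if xs = [] then nu else t xs rs)"
  have H: "p xs As = (\<Sum>rs\<in>{rs. vec_in rs (map2 Nset xs As)}. Wt t' xs rs)"
    if As: "As \<in> menus T" and v: "vec_in xs As" for As xs
  proof -
    have lx: "length xs = T" using As v by (simp add: menus_def vec_in_def)
    have "p xs As = (\<Sum>rs \<in> {rs. vec_in rs (map2 Nset xs As)}.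
                       pmf nu (rs ! 0) * (\<Prod>k \<in> {1..<T}. pmf (t (take k xs) (take k rs)) (rs ! k)))"
      using eq As v by blast
    also have "\<dots> = (\<Sum>rs\<in>{rs. vec_in rs (map2 Nset xs As)}. Wt t' xs rs)"
    proof (rule sum.cong[OF refl])
      fix rs assume rs: "rs \<in> {rs. vec_in rs (map2 Nset xs As)}"
      have lr: "length rs = T" using rs vec_map2(1)[OF _ vec_in_length[OF v]] lx by auto
      have "(\<Prod>k \<in> {1..<T}. pmf (t (take k xs) (take k rs)) (rs ! k))
          = (\<Prod>k \<in> {1..<T}. pmf (t' (take k xs) (take k rs)) (rs ! k))"
      proof (rule prod.cong[OF refl])
        fix k assume "k \<in> {1..<T}"
        then have "take k xs \<noteq> []" using lx by auto
        then show "pmf (t (take k xs) (take k rs)) (rs ! k) = pmf (t' (take k xs) (take k rs)) (rs ! k)"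
          by (simp add: t'_def)
      qed
      moreover have "pmf nu (rs!0) = pmf (t' [] []) (rs!0)" by (simp add: t'_def)
      ultimately show "pmf nu (rs ! 0) * (\<Prod>k \<in> {1..<T}. pmf (t (take k xs) (take k rs)) (rs ! k)) = Wt t' xs rs"
        using Wt_cdru[OF T1 lr lx, of t'] by simp
    qed
    finally show ?thesis .
  qed
  have S: "set_pmf (t' xs rs) \<subseteq> lorders"
    if "length xs = length rs" "1 \<le> length xs" "length xs < T" "set rs \<subseteq> lorders" for xs rs
  proof -
    have "xs \<noteq> []" using that by auto
    then have "t' xs rs = t xs rs" by (simp add: t'_def)
    moreover have "length xs \<in> {1..T-1}" using that by auto
    ultimately show ?thesis using ts that by auto
  qed
  note MF = cdru_marg_formula[of T p t', OF H S]
  have marg_sum: "(\<Sum>y\<in>B. marg p (T - (\<tau> + 1)) (xs @ [y]) (As @ [B]))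
      = (\<Sum>rs\<in>{rs. vec_in rs (map2 Nset xs As)}. Wt t' xs rs)"
    if tau: "\<tau> \<in> {1..T-1}" and As: "As \<in> menus \<tau>" and v: "vec_in xs As" and B: "B \<noteq> {}"
    for \<tau> As xs B
  proof -
    have len: "length xs = length As" using v by (rule vec_in_length)
    have lA: "length As = \<tau>" using As by (simp add: menus_def)
    let ?V = "{rs. vec_in rs (map2 Nset xs As)}"
    have "(\<Sum>y\<in>B. marg p (T - (\<tau> + 1)) (xs @ [y]) (As @ [B]))
        = (\<Sum>y\<in>B. \<Sum>rs\<in>{rs. vec_in rs (map2 Nset (xs@[y]) (As@[B]))}. Wt t' (xs@[y]) rs)"
    proof (rule sum.cong[OF refl])
      fix y assume y: "y \<in> B"
      show "marg p (T - (\<tau> + 1)) (xs @ [y]) (As @ [B])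
          = (\<Sum>rs\<in>{rs. vec_in rs (map2 Nset (xs@[y]) (As@[B]))}. Wt t' (xs@[y]) rs)"
      proof (rule MF)
        show "length (As @ [B]) + (T - (\<tau> + 1)) = T" using lA tau by auto
        show "1 \<le> length (As @ [B])" by simp
        show "vec_in (xs @ [y]) (As @ [B])" using v y by (simp add: vec_in_snoc)
      qed
    qed
    also have "\<dots> = (\<Sum>y\<in>B. \<Sum>rs\<in>?V. \<Sum>r\<in>Nset y B. Wt t' xs rs * pmf (t' xs rs) r)"
    proof (rule sum.cong[OF refl])
      fix y
      have "(\<Sum>rs\<in>{rs. vec_in rs (map2 Nset (xs@[y]) (As@[B]))}. Wt t' (xs@[y]) rs)
          = (\<Sum>rs\<in>?V. \<Sum>r\<in>Nset y B. Wt t' (xs@[y]) (rs@[r]))"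
        using len by (simp add: sum_vec_snoc)
      also have "\<dots> = (\<Sum>rs\<in>?V. \<Sum>r\<in>Nset y B. Wt t' xs rs * pmf (t' xs rs) r)"
      proof (rule sum.cong[OF refl])
        fix rs assume "rs \<in> ?V"
        then have "length rs = length xs" using vec_map2(1)[OF _ len] by blast
        then show "(\<Sum>r\<in>Nset y B. Wt t' (xs@[y]) (rs@[r])) = (\<Sum>r\<in>Nset y B. Wt t' xs rs * pmf (t' xs rs) r)"
          by (simp add: Wt_snoc)
      qed
      finally show "(\<Sum>rs\<in>{rs. vec_in rs (map2 Nset (xs@[y]) (As@[B]))}. Wt t' (xs@[y]) rs)
          = (\<Sum>rs\<in>?V. \<Sum>r\<in>Nset y B. Wt t' xs rs * pmf (t' xs rs) r)" .
    qed
    also have "\<dots> = (\<Sum>rs\<in>?V. Wt t' xs rs * (\<Sum>y\<in>B. \<Sum>r\<in>Nset y B. pmf (t' xs rs) r))"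
      by (rule swap_distrib)
    also have "\<dots> = (\<Sum>rs\<in>?V. Wt t' xs rs)"
    proof (rule sum.cong[OF refl])
      fix rs assume rs: "rs \<in> ?V"
      have "(\<Sum>y\<in>B. \<Sum>r\<in>Nset y B. pmf (t' xs rs) r) = (\<Sum>r\<in>lorders. pmf (t' xs rs) r)"
        by (rule sum_Nset_partition[OF B])
      also have "\<dots> = 1"
      proof (rule sum_pmf_eq_1)
        show "finite (lorders :: 'a rel set)" by simp
        have "length rs = length xs" using rs vec_map2(1)[OF _ len] by blast
        moreover have "set rs \<subseteq> lorders" using rs vec_Nset_lorders[OF _ len] by blast
        moreover have "length xs < T" using tau lA len T1 by auto
        moreover have "1 \<le> length xs" using tau lA len by auto
        ultimately show "set_pmf (t' xs rs) \<subseteq> lorders"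
          using S[of xs rs] by simp
      qed
      finally show "Wt t' xs rs * (\<Sum>y\<in>B. \<Sum>r\<in>Nset y B. pmf (t' xs rs) r) = Wt t' xs rs" by simp
    qed
    finally show ?thesis .
  qed
  have mg: "marginality T p"
    unfolding marginality_def
  proof (intro ballI allI impI)
    fix \<tau> :: nat and As :: "'a set list" and xs :: "'a list" and B C :: "'a set" assume "\<tau> \<in> {1..T-1}" "As \<in> menus \<tau>" "vec_in xs As" "B \<noteq> {}" "C \<noteq> {}"
    then show "(\<Sum>y\<in>B. marg p (T - (\<tau> + 1)) (xs @ [y]) (As @ [B])) =
               (\<Sum>y\<in>C. marg p (T - (\<tau> + 1)) (xs @ [y]) (As @ [C]))"
      using marg_sum by metis
  qed
  define q where "q = (\<lambda>xs Bs. \<Sum>rs\<in>{rs. vec_in rs (map2 Rset xs Bs)}. Wt t' xs rs)"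
  have "is_moebius_inverse T p q"
    unfolding is_moebius_inverse_def
  proof (intro ballI allI impI)
    fix As :: "'a set list" and xs :: "'a list" assume As: "As \<in> menus T" and v: "vec_in xs As"
    have "p xs As = (\<Sum>rs\<in>{rs. vec_in rs (map2 Nset xs As)}. Wt t' xs rs)" by (rule H[OF As v])
    also have "\<dots> = (\<Sum>Bs\<in>supvecs As. q xs Bs)"
      unfolding q_def by (rule grouping[OF vec_in_length[OF v]])
    finally show "p xs As = (\<Sum>Bs\<in>supvecs As. q xs Bs)" .
  qed
  moreover have "\<forall>As\<in>menus T. \<forall>xs. vec_in xs As \<longrightarrow> q xs As \<ge> 0"
    unfolding q_def by (intro ballI allI impI sum_nonneg Wt_nonneg)
  ultimately have "complete_monotone T p" unfolding complete_monotone_def by blast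
  with mg show ?thesis by blast
qed


section \<open>Sufficiency\<close>

definition ftr :: "nat \<Rightarrow> ('a::finite list \<Rightarrow> 'a set list \<Rightarrow> real) \<Rightarrow> 'a list \<Rightarrow> 'a rel list \<Rightarrow> 'a \<Rightarrow> 'a set \<Rightarrow> real" where
  "ftr T q xs rs = (\<lambda>y C. marg q (T - Suc (length xs)) (xs@[y]) (map2 low xs rs @ [C])
                           / marg q (T - length xs) xs (map2 low xs rs))"

definition tr :: "nat \<Rightarrow> ('a::finite list \<Rightarrow> 'a set list \<Rightarrow> real) \<Rightarrow> 'a list \<Rightarrow> 'a rel list \<Rightarrow> 'a rel pmf" where
  "tr T q xs rs = falm (ftr T q xs rs)"

context
  fixes T :: nat and p q :: "'a::finite list \<Rightarrow> 'a set list \<Rightarrow> real"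
  assumes T1: "T \<ge> 1" and rj: "is_rjcr T p" and mg: "marginality T p"
    and mi: "is_moebius_inverse T p q" and qnn: "\<forall>As\<in>menus T. \<forall>xs. vec_in xs As \<longrightarrow> q xs As \<ge> 0"
begin

lemma L1: "length As + n = T \<Longrightarrow> As \<in> menus (length As) \<Longrightarrow> (\<Sum>xs\<in>{xs. vec_in xs As}. marg p n xs As) = 1"
proof (induction n arbitrary: As)
  case 0
  have "As \<in> menus T" using 0 by simp
  then show ?case using rj by (simp add: is_rjcr_def)
next
  case (Suc n)
  have m: "As@[UNIV] \<in> menus (length (As@[UNIV]))" using Suc.prems(2) by (simp add: menus_def)
  have "(\<Sum>xs\<in>{xs. vec_in xs As}. marg p (Suc n) xs As)
      = (\<Sum>xs\<in>{xs. vec_in xs As}. \<Sum>y\<in>UNIV. marg p n (xs@[y]) (As@[UNIV]))" by simp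
  also have "\<dots> = (\<Sum>xs\<in>{xs. vec_in xs (As@[UNIV])}. marg p n xs (As@[UNIV]))"
    by (rule sum_vec_snoc[symmetric])
  also have "\<dots> = 1"
  proof (rule Suc.IH)
    show "length (As@[UNIV]) + n = T" using Suc.prems(1) by simp
  qed (rule m)
  finally show ?case .
qed

lemma L2: "length As + n = T \<Longrightarrow> vec_in xs As \<Longrightarrow> marg p n xs As = (\<Sum>Bs\<in>supvecs As. marg q n xs Bs)"
proof (induction n arbitrary: xs As)
  case 0
  have "As \<in> menus T" using 0 vec_in_menus[OF 0(2)] by simp
  then show ?case using mi 0(2) unfolding is_moebius_inverse_def by simp
next
  case (Suc n)
  have "marg p (Suc n) xs As = (\<Sum>y\<in>UNIV. marg p n (xs@[y]) (As@[UNIV]))" by simp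
  also have "\<dots> = (\<Sum>y\<in>UNIV. \<Sum>Bs\<in>supvecs (As@[UNIV]). marg q n (xs@[y]) Bs)"
  proof (rule sum.cong[OF refl])
    fix y :: 'a
    show "marg p n (xs@[y]) (As@[UNIV]) = (\<Sum>Bs\<in>supvecs (As@[UNIV]). marg q n (xs@[y]) Bs)"
    proof (rule Suc.IH)
      show "length (As@[UNIV]) + n = T" using Suc.prems(1) by simp
      show "vec_in (xs@[y]) (As@[UNIV])" using Suc.prems(2) by (simp add: vec_in_snoc)
    qed
  qed
  also have "\<dots> = (\<Sum>y\<in>UNIV. \<Sum>Bs\<in>supvecs As. marg q n (xs@[y]) (Bs@[UNIV]))"
    by (simp add: sum_supvecs_snoc UNIV_supsets)
  also have "\<dots> = (\<Sum>Bs\<in>supvecs As. \<Sum>y\<in>UNIV. marg q n (xs@[y]) (Bs@[UNIV]))"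
    by (rule sum.swap)
  also have "\<dots> = (\<Sum>Bs\<in>supvecs As. marg q (Suc n) xs Bs)" by simp
  finally show ?case .
qed

lemma L3: "length Bs + n = T \<Longrightarrow> vec_in xs Bs \<Longrightarrow> 0 \<le> marg q n xs Bs"
proof (induction n arbitrary: xs Bs)
  case 0
  have "Bs \<in> menus T" using 0 vec_in_menus[OF 0(2)] by simp
  then show ?case using qnn 0(2) by simp
next
  case (Suc n)
  have "0 \<le> (\<Sum>y\<in>UNIV. marg q n (xs@[y]) (Bs@[UNIV]))"
  proof (rule sum_nonneg)
    fix y :: 'a
    show "0 \<le> marg q n (xs@[y]) (Bs@[UNIV])"
    proof (rule Suc.IH)
      show "length (Bs@[UNIV]) + n = T" using Suc.prems(1) by simp
      show "vec_in (xs@[y]) (Bs@[UNIV])" using Suc.prems(2) by (simp add: vec_in_snoc)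
    qed
  qed
  then show ?case by simp
qed

lemma margp_top: "marg p T [] [] = 1"
  using L1[of "[]" T] by (simp add: vec_Nil menus_def)

lemma Q00: "marg q T [] [] = 1"
  using L2[of "[]" T "[]"] margp_top by (simp add: supvecs_Nil vec_in_def)

lemma L4:
  assumes m: "m < T" and lA: "length As = m" and v: "vec_in xs As" and D: "D \<noteq> {}"
  shows "(\<Sum>y\<in>D. marg p (T - Suc m) (xs@[y]) (As@[D])) = marg p (T - m) xs As"
proof (cases "m = 0")
  case True
  then have As: "As = []" and xs: "xs = []" using lA v by (auto simp: vec_in_def)
  have "(\<Sum>xs\<in>{xs. vec_in xs ([]@[D])}. marg p (T - 1) xs ([]@[D])) = 1"
    by (rule L1) (use T1 D in \<open>auto simp: menus_def\<close>)
  then have "(\<Sum>y\<in>D. marg p (T - 1) [y] [D]) = 1"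
    by (simp only: sum_vec_snoc vec_Nil) simp
  then show ?thesis using As xs True margp_top by simp
next
  case False
  have tau: "m \<in> {1..T-1}" using False m by auto
  have As: "As \<in> menus m" using vec_in_menus[OF v] lA by simp
  have "(\<Sum>y\<in>D. marg p (T - (m + 1)) (xs @ [y]) (As @ [D])) =
        (\<Sum>y\<in>UNIV. marg p (T - (m + 1)) (xs @ [y]) (As @ [UNIV]))"
    using mg tau As v D unfolding marginality_def by blast
  also have "\<dots> = marg p (Suc (T - (m + 1))) xs As" by simp
  also have "Suc (T - (m + 1)) = T - m" using m by simp
  finally show ?thesis by simp
qed

lemma L5:
  assumes m: "m < T" and lx: "length xs = m" and v: "vec_in xs Bs" and D: "D \<noteq> {}"
  shows "(\<Sum>y\<in>D. \<Sum>C\<in>{C. D \<subseteq> C}. marg q (T - Suc m) (xs@[y]) (Bs@[C])) = marg q (T - m) xs Bs"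
proof (rule moebius_unique[where S="{B. vec_in xs B}" and le="\<lambda>A B. \<forall>i<length xs. A!i \<subseteq> B!i"
    and a=Bs and f="\<lambda>B. \<Sum>y\<in>D. \<Sum>C\<in>{C. D \<subseteq> C}. marg q (T - Suc m) (xs@[y]) (B@[C])"
    and g="\<lambda>B. marg q (T - m) xs B"])
  have "{B :: 'a set list. vec_in xs B} \<subseteq> {B. set B \<subseteq> UNIV \<and> length B = length xs}"
    by (auto simp: vec_in_def)
  moreover have "finite {B :: 'a set list. set B \<subseteq> UNIV \<and> length B = length xs}"
    by (rule finite_lists_length_eq) simp
  ultimately show "finite {B. vec_in xs B}" by (rule finite_subset)
  show "Bs \<in> {B. vec_in xs B}" using v by simp
  show "\<forall>i<length xs. A!i \<subseteq> A!i" for A :: "'a set list" by simp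
  show "\<forall>i<length xs. A!i \<subseteq> C!i" if "\<forall>i<length xs. A!i \<subseteq> B!i" "\<forall>i<length xs. B!i \<subseteq> C!i"
    for A B C :: "'a set list" using that by blast
  show "A = B" if "A \<in> {B. vec_in xs B}" "B \<in> {B. vec_in xs B}"
    "\<forall>i<length xs. A!i \<subseteq> B!i" "\<forall>i<length xs. B!i \<subseteq> A!i" for A B :: "'a set list"
  proof (rule nth_equalityI)
    have "length A = length xs" "length B = length xs" using that(1,2) by (simp_all add: vec_in_def)
    then show "length A = length B" by simp
    fix i assume "i < length A"
    then have i: "i < length xs" using \<open>length A = length xs\<close> by simp
    have "A!i \<subseteq> B!i" "B!i \<subseteq> A!i" using that(3,4) i by blast+
    then show "A!i = B!i" by (rule subset_antisym)
  qed
next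
  fix A assume A: "A \<in> {B. vec_in xs B}"
  then have vA: "vec_in xs A" by simp
  have lA: "length A = m" using vA lx by (simp add: vec_in_def)
  have Sup: "{b \<in> {B. vec_in xs B}. \<forall>i<length xs. A!i \<subseteq> b!i} = supvecs A"
  proof (intro equalityI subsetI)
    fix b assume "b \<in> {b \<in> {B. vec_in xs B}. \<forall>i<length xs. A!i \<subseteq> b!i}"
    then show "b \<in> supvecs A" using vA by (auto simp: supvecs_def vec_in_def)
  next
    fix b assume "b \<in> supvecs A"
    then show "b \<in> {b \<in> {B. vec_in xs B}. \<forall>i<length xs. A!i \<subseteq> b!i}"
      using vA supvecs_vec_in[OF vA] by (auto simp: supvecs_def vec_in_def)
  qed
  have "(\<Sum>b\<in>supvecs A. \<Sum>y\<in>D. \<Sum>C\<in>{C. D \<subseteq> C}. marg q (T - Suc m) (xs@[y]) (b@[C]))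
      = (\<Sum>y\<in>D. \<Sum>b\<in>supvecs A. \<Sum>C\<in>{C. D \<subseteq> C}. marg q (T - Suc m) (xs@[y]) (b@[C]))"
    by (rule sum.swap)
  also have "\<dots> = (\<Sum>y\<in>D. \<Sum>B'\<in>supvecs (A@[D]). marg q (T - Suc m) (xs@[y]) B')"
    by (simp add: sum_supvecs_snoc)
  also have "\<dots> = (\<Sum>y\<in>D. marg p (T - Suc m) (xs@[y]) (A@[D]))"
  proof (rule sum.cong[OF refl])
    fix y assume y: "y \<in> D"
    show "(\<Sum>B'\<in>supvecs (A@[D]). marg q (T - Suc m) (xs@[y]) B') = marg p (T - Suc m) (xs@[y]) (A@[D])"
    proof (rule L2[symmetric])
      show "length (A@[D]) + (T - Suc m) = T" using lA m by simp
      show "vec_in (xs@[y]) (A@[D])" using vA y by (simp add: vec_in_snoc)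
    qed
  qed
  also have "\<dots> = marg p (T - m) xs A" by (rule L4[OF m lA vA D])
  also have "\<dots> = (\<Sum>b\<in>supvecs A. marg q (T - m) xs b)"
    by (rule L2) (use lA m vA in simp_all)
  finally show "(\<Sum>b\<in>{b \<in> {B. vec_in xs B}. \<forall>i<length xs. A!i \<subseteq> b!i}.
          \<Sum>y\<in>D. \<Sum>C\<in>{C. D \<subseteq> C}. marg q (T - Suc m) (xs@[y]) (b@[C]))
      = (\<Sum>b\<in>{b \<in> {B. vec_in xs B}. \<forall>i<length xs. A!i \<subseteq> b!i}. marg q (T - m) xs b)"
    unfolding Sup .
qed

lemma L7: "length xs \<le> T \<Longrightarrow> vec_in xs Bs \<Longrightarrow>
    (\<Sum>rs\<in>{rs. vec_in rs (map2 Rset xs Bs)}. Wt (tr T q) xs rs) = marg q (T - length xs) xs Bs"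
proof (induction xs arbitrary: Bs rule: rev_induct)
  case Nil
  then have "Bs = []" by (simp add: vec_in_def)
  then show ?case using Q00 by (simp add: vec_Nil)
next
  case (snoc y xs)
  from snoc.prems(2) have "Bs \<noteq> []" by (auto simp: vec_in_def)
  then obtain Bs' C where Bs: "Bs = Bs'@[C]" by (metis rev_exhaust)
  have v: "vec_in xs Bs'" and yC: "y \<in> C" using snoc.prems(2) by (simp_all add: Bs vec_in_snoc)
  have len: "length xs = length Bs'" using v by (rule vec_in_length)
  have m: "length xs < T" using snoc.prems(1) by simp
  define Q where "Q = marg q (T - length xs) xs Bs'"
  define Q1 where "Q1 = marg q (T - Suc (length xs)) (xs@[y]) (Bs'@[C])"
  define V where "V = {rs. vec_in rs (map2 Rset xs Bs')}"
  have finV: "finite V" unfolding V_def by (rule finite_vec)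
  have IH: "(\<Sum>rs\<in>V. Wt (tr T q) xs rs) = Q"
    unfolding V_def Q_def using snoc.IH[OF _ v] m by simp
  have sum_eq: "(\<Sum>rs\<in>{rs. vec_in rs (map2 Rset (xs@[y]) Bs)}. Wt (tr T q) (xs@[y]) rs)
      = (\<Sum>rs\<in>V. Wt (tr T q) xs rs * (\<Sum>r\<in>Rset y C. pmf (tr T q xs rs) r))"
  proof -
    have "(\<Sum>rs\<in>{rs. vec_in rs (map2 Rset (xs@[y]) Bs)}. Wt (tr T q) (xs@[y]) rs)
        = (\<Sum>rs\<in>V. \<Sum>r\<in>Rset y C. Wt (tr T q) (xs@[y]) (rs@[r]))"
      unfolding Bs V_def using len by (simp add: sum_vec_snoc)
    also have "\<dots> = (\<Sum>rs\<in>V. Wt (tr T q) xs rs * (\<Sum>r\<in>Rset y C. pmf (tr T q xs rs) r))"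
    proof (rule sum.cong[OF refl])
      fix rs assume "rs \<in> V"
      then have "length rs = length xs" unfolding V_def using vec_map2(1)[OF _ len] by blast
      then show "(\<Sum>r\<in>Rset y C. Wt (tr T q) (xs@[y]) (rs@[r])) = Wt (tr T q) xs rs * (\<Sum>r\<in>Rset y C. pmf (tr T q xs rs) r)"
        by (simp add: Wt_snoc sum_distrib_left)
    qed
    finally show ?thesis .
  qed
  have tr_eq: "tr T q xs rs = falm (\<lambda>y C. marg q (T - Suc (length xs)) (xs@[y]) (Bs'@[C]) / Q)"
    if "rs \<in> V" for rs
  proof -
    have "vec_in rs (map2 Rset xs Bs')" using that unfolding V_def by simp
    then have "map2 low xs rs = Bs'" by (rule vec_Rset_low[OF _ len])
    then show ?thesis by (simp add: tr_def ftr_def Q_def)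
  qed
  have Qnn: "0 \<le> Q" unfolding Q_def by (rule L3) (use len m v in simp_all)
  have rhs: "marg q (T - length (xs@[y])) (xs@[y]) Bs = Q1" by (simp add: Q1_def Bs)
  show ?case
  proof (cases "Q = 0")
    case True
    have s0: "sum (Wt (tr T q) xs) V = 0" using IH True by simp
    have "\<forall>rs\<in>V. Wt (tr T q) xs rs = 0"
    proof
      fix rs assume rs: "rs \<in> V"
      have "\<And>x. x \<in> V \<Longrightarrow> 0 \<le> Wt (tr T q) xs x" by (rule Wt_nonneg)
      then have "sum (Wt (tr T q) xs) V = 0 \<longleftrightarrow> (\<forall>x\<in>V. Wt (tr T q) xs x = 0)"
        by (rule sum_nonneg_eq_0_iff[OF finV])
      then show "Wt (tr T q) xs rs = 0" using s0 rs by blast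
    qed
    then have "(\<Sum>rs\<in>V. Wt (tr T q) xs rs * (\<Sum>r\<in>Rset y C. pmf (tr T q xs rs) r)) = 0" by simp
    moreover have "Q1 = 0"
    proof -
      have "(\<Sum>y'\<in>{y}. \<Sum>C'\<in>{C'. {y} \<subseteq> C'}. marg q (T - Suc (length xs)) (xs@[y']) (Bs'@[C'])) = Q"
        unfolding Q_def by (rule L5) (use m v in simp_all)
      then have "(\<Sum>C'\<in>{C'. y \<in> C'}. marg q (T - Suc (length xs)) (xs@[y]) (Bs'@[C'])) = Q"
        by simp
      then have s0: "(\<Sum>C'\<in>{C'. y \<in> C'}. marg q (T - Suc (length xs)) (xs@[y]) (Bs'@[C'])) = 0"
        using True by (simp only:)
      have nn: "0 \<le> marg q (T - Suc (length xs)) (xs@[y]) (Bs'@[C'])" if "C' \<in> {C'. y \<in> C'}" for C'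
        by (rule L3) (use that len m v in \<open>simp_all add: vec_in_snoc\<close>)
      have "finite {C'::'a set. y \<in> C'}" by simp
      then have "(\<Sum>C'\<in>{C'. y \<in> C'}. marg q (T - Suc (length xs)) (xs@[y]) (Bs'@[C'])) = 0
          \<longleftrightarrow> (\<forall>C'\<in>{C'. y \<in> C'}. marg q (T - Suc (length xs)) (xs@[y]) (Bs'@[C']) = 0)"
        using nn by (rule sum_nonneg_eq_0_iff)
      then have "\<forall>C'\<in>{C'. y \<in> C'}. marg q (T - Suc (length xs)) (xs@[y]) (Bs'@[C']) = 0"
        using s0 by blast
      moreover have "C \<in> {C'. y \<in> C'}" using yC by simp
      ultimately show ?thesis unfolding Q1_def by blast
    qed
    ultimately show ?thesis using sum_eq rhs by simp
  next
    case False
    then have pos: "Q > 0" using Qnn by simp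
    define F where "F = (\<lambda>y C. marg q (T - Suc (length xs)) (xs@[y]) (Bs'@[C]) / Q)"
    have Fnn: "0 \<le> F y' C'" if "y' \<in> C'" for y' C'
    proof -
      have "0 \<le> marg q (T - Suc (length xs)) (xs@[y']) (Bs'@[C'])"
        by (rule L3) (use that len m v in \<open>simp_all add: vec_in_snoc\<close>)
      then show ?thesis unfolding F_def using pos by simp
    qed
    have Fbm: "(\<Sum>y\<in>D. \<Sum>C\<in>{C. D \<subseteq> C}. F y C) = 1" if "D \<noteq> {}" for D
    proof -
      have "(\<Sum>y\<in>D. \<Sum>C\<in>{C. D \<subseteq> C}. F y C)
          = (\<Sum>y\<in>D. \<Sum>C\<in>{C. D \<subseteq> C}. marg q (T - Suc (length xs)) (xs@[y]) (Bs'@[C])) / Q"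
        unfolding F_def by (simp add: sum_divide_distrib)
      also have "(\<Sum>y\<in>D. \<Sum>C\<in>{C. D \<subseteq> C}. marg q (T - Suc (length xs)) (xs@[y]) (Bs'@[C])) = Q"
        unfolding Q_def by (rule L5) (use m v that in simp_all)
      finally show ?thesis using pos by simp
    qed
    have inner: "(\<Sum>r\<in>Rset y C. pmf (tr T q xs rs) r) = F y C" if "rs \<in> V" for rs
      unfolding tr_eq[OF that] F_def[symmetric] using falm_prop[OF Fnn Fbm yC] by blast
    have "(\<Sum>rs\<in>V. Wt (tr T q) xs rs * (\<Sum>r\<in>Rset y C. pmf (tr T q xs rs) r))
        = (\<Sum>rs\<in>V. Wt (tr T q) xs rs * F y C)"
      using inner by (intro sum.cong refl) simp
    also have "\<dots> = (\<Sum>rs\<in>V. Wt (tr T q) xs rs) * F y C" by (rule sum_distrib_right[symmetric])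
    also have "\<dots> = Q * F y C" using IH by simp
    also have "\<dots> = Q1" unfolding F_def Q1_def using pos by simp
    finally show ?thesis using sum_eq rhs by simp
  qed
qed

lemma sufficiency: "cdru T p"
  unfolding cdru_def
proof (intro exI conjI)
  show "set_pmf (tr T q [] []) \<subseteq> lorders" unfolding tr_def by (rule falm_support)
  show "\<forall>n\<in>{1..T-1}. \<forall>xs rs. length xs = n \<longrightarrow> length rs = n \<longrightarrow> set rs \<subseteq> lorders \<longrightarrow>
          set_pmf (tr T q xs rs) \<subseteq> lorders"
    unfolding tr_def using falm_support by blast
  show "\<forall>As\<in>menus T. \<forall>xs. vec_in xs As \<longrightarrow>
          p xs As = (\<Sum>rs \<in> {rs. vec_in rs (map2 Nset xs As)}.
                       pmf (tr T q [] []) (rs ! 0) *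
                       (\<Prod>k \<in> {1..<T}. pmf (tr T q (take k xs) (take k rs)) (rs ! k)))"
  proof (intro ballI allI impI)
    fix As :: "'a set list" and xs :: "'a list" assume As: "As \<in> menus T" and v: "vec_in xs As"
    have lx: "length xs = T" using As v by (simp add: menus_def vec_in_def)
    have "p xs As = (\<Sum>Bs\<in>supvecs As. q xs Bs)" using mi As v unfolding is_moebius_inverse_def by blast
    also have "\<dots> = (\<Sum>Bs\<in>supvecs As. \<Sum>rs\<in>{rs. vec_in rs (map2 Rset xs Bs)}. Wt (tr T q) xs rs)"
    proof (rule sum.cong[OF refl])
      fix Bs assume "Bs \<in> supvecs As"
      then have vB: "vec_in xs Bs" by (rule supvecs_vec_in[OF v])
      show "q xs Bs = (\<Sum>rs\<in>{rs. vec_in rs (map2 Rset xs Bs)}. Wt (tr T q) xs rs)"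
        using L7[OF _ vB] lx by simp
    qed
    also have "\<dots> = (\<Sum>rs\<in>{rs. vec_in rs (map2 Nset xs As)}. Wt (tr T q) xs rs)"
      by (rule grouping[OF vec_in_length[OF v], symmetric])
    also have "\<dots> = (\<Sum>rs \<in> {rs. vec_in rs (map2 Nset xs As)}.
                       pmf (tr T q [] []) (rs ! 0) *
                       (\<Prod>k \<in> {1..<T}. pmf (tr T q (take k xs) (take k rs)) (rs ! k)))"
    proof (rule sum.cong[OF refl])
      fix rs assume rs: "rs \<in> {rs. vec_in rs (map2 Nset xs As)}"
      have lr: "length rs = T" using rs vec_map2(1)[OF _ vec_in_length[OF v]] lx by auto
      show "Wt (tr T q) xs rs = pmf (tr T q [] []) (rs ! 0) *
                       (\<Prod>k \<in> {1..<T}. pmf (tr T q (take k xs) (take k rs)) (rs ! k))"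
        using Wt_cdru[OF T1 lr lx] by simp
    qed
    finally show "p xs As = (\<Sum>rs \<in> {rs. vec_in rs (map2 Nset xs As)}.
                       pmf (tr T q [] []) (rs ! 0) *
                       (\<Prod>k \<in> {1..<T}. pmf (tr T q (take k xs) (take k rs)) (rs ! k)))" .
  qed
qed

end

theorem theorem11:
  fixes T :: nat and p :: "'a::finite list \<Rightarrow> 'a set list \<Rightarrow> real"
  assumes "T \<ge> 1" and "is_rjcr T p"
  shows "cdru T p \<longleftrightarrow> marginality T p \<and> complete_monotone T p"
proof
  assume "cdru T p"
  then show "marginality T p \<and> complete_monotone T p" using necessity[OF assms(1)] by blast
next
  assume h: "marginality T p \<and> complete_monotone T p"
  then obtain q where "is_moebius_inverse T p q" "\<forall>As\<in>menus T. \<forall>xs. vec_in xs As \<longrightarrow> q xs As \<ge> 0"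
    unfolding complete_monotone_def by blast
  then show "cdru T p" using sufficiency[OF assms(1,2)] h by blast
qed

end
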